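(* Let $\Omega\subseteq\mathbf{W}^{\mathbb{R}}_D$ be a weighted clone. Then $\mathrm{supp}(\Omega)=\mathrm{Pol}(\mathrm{Imp}_{\mathbb{R}}(\Omega))$.
   Context: $D$ is a fixed finite set with $|D|\ge2$; $\overline{\mathbb{R}}=\mathbb{R}\cup\{\infty\}$. An $m$-ary weighted relation is $\gamma:D^m\to\overline{\mathbb{R}}$; $\mathbf{\Phi}^{\mathbb{R}}_D$ is the set of all of them; $\mathrm{Feas}(\gamma)=\{\mathbf{x}:\gamma(\mathbf{x})<\infty\}$. A $k$-ary operation is $f:D^k\to D$, applied to tuples coordinatewise; $\mathbf{O}^{(k)}_D$ is the set of $k$-ary operations. $f$ is a polymorphism of $\gamma$ if $f(\mathbf{x}_1,\dots,\mathbf{x}_k)\in\mathrm{Feas}(\gamma)$ whenever all $\mathbf{x}_i\in\mathrm{Feas}(\gamma)$; $\mathrm{Pol}(\Gamma)$ is the set of operations that are polymorphisms of every $\gamma\in\Gamma$. Projections: $e^{(k)}_i(x_1,\dots,x_k)=x_i$; $\mathbf{J}_D$ all projections, $\mathbf{J}_D^{(k)}$ the $k$-ary ones. Superposition: $f[g_1,\dots,g_k](\mathbf{x})=f(g_1(\mathbf{x}),\dots,g_k(\mathbf{x}))$. A $k$-ary weighting is $\omega:\mathbf{O}^{(k)}_D\to\mathbb{R}$ with $\sum_f\omega(f)=0$ and $\omega(f)<0$ only if $f$ is a projection; $\mathbf{W}^{\mathbb{R}}_D$ is the set of all weightings. $\mathrm{supp}(\omega)=\mathbf{J}_D^{(k)}\cup\{f:\omega(f)>0\}$;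 $\mathrm{supp}(\Omega)=\mathbf{J}_D\cup\bigcup_{\omega\in\Omega}\mathrm{supp}(\omega)$. Superposition of a weighting: $\omega[g_1,\dots,g_k](f')=\sum_{f:f[g_1,\dots,g_k]=f'}\omega(f)$, proper if it is a weighting. Topology: $k$-ary weightings lie in $\mathbb{R}^{\mathbf{O}^{(k)}_D}$ with disjoint union topology over $k$. A weighted clone is a non-empty set $\Omega$ of weightings closed under scaling by non-negative reals, addition of weightings of equal arity, and proper superposition with operations from $\mathrm{supp}(\Omega)$, and topologically closed. A $k$-ary weighting $\omega$ improves $\gamma$ if $\mathrm{supp}(\omega)\subseteq\mathrm{Pol}(\gamma)$ and for all $\mathbf{x}_1,\dots,\mathbf{x}_k\in\mathrm{Feas}(\gamma)$, $\sum_{f\in\mathrm{supp}(\omega)}\omega(f)\gamma(f(\mathbf{x}_1,\dots,\mathbf{x}_k))\le0$. $\mathrm{Imp}_{\mathbb{R}}(\Omega)$ is the set of weighted relations in $\mathbf{\Phi}^{\mathbb{R}}_D$ improved by every $\omega\in\Omega$. *)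

theory Defs
  imports "HOL-Analysis.Analysis"
begin

text \<open>The domain D is the universe of a finite type 'd.
A k-ary operation is represented canonically as a function on lists which is
'undefined' off lists of length k; operations are paired with their arity.
An m-ary weighted relation is a pair (m, gamma) with gamma on lists of
length m taking values in the extended reals other than minus infinity
(values off length-m lists are irrelevant).  A k-ary weighting is a pair
(k, omega) with omega a real function on operations, vanishing outside the
k-ary operations.\<close>

type_synonym 'd op = "nat \<times> ('d list \<Rightarrow> 'd)"
type_synonym 'd wrel = "nat \<times> ('d list \<Rightarrow> ereal)"
type_synonym 'd wgt = "nat \<times> (('d list \<Rightarrow> 'd) \<Rightarrow> real)"

definition ops :: "nat \<Rightarrow> ('d list \<Rightarrow> 'd) set" where
  "ops k = {f. \<forall>xs. length xs \<noteq> k \<longrightarrow> f xs = undefined}"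

definition proj :: "nat \<Rightarrow> nat \<Rightarrow> ('d list \<Rightarrow> 'd)" where
  "proj k i = (\<lambda>xs. if length xs = k then xs ! i else undefined)"

definition projs :: "nat \<Rightarrow> ('d list \<Rightarrow> 'd) set" where
  "projs k = {proj k i | i. i < k}"

definition all_projs :: "'d op set" where
  "all_projs = {(k, f). 1 \<le> k \<and> f \<in> projs k}"

definition apply_op :: "('d list \<Rightarrow> 'd) \<Rightarrow> nat \<Rightarrow> 'd list list \<Rightarrow> 'd list" where
  "apply_op f m xs = map (\<lambda>i. f (map (\<lambda>x. x ! i) xs)) [0..<m]"

definition is_wrel :: "'d wrel \<Rightarrow> bool" where
  "is_wrel g \<longleftrightarrow> (\<forall>x. length x = fst g \<longrightarrow> snd g x \<noteq> -\<infinity>)"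

definition Feas :: "'d wrel \<Rightarrow> 'd list set" where
  "Feas g = {x. length x = fst g \<and> snd g x < \<infinity>}"

definition is_polymorphism :: "'d op \<Rightarrow> 'd wrel \<Rightarrow> bool" where
  "is_polymorphism F g \<longleftrightarrow>
     (\<forall>xs. length xs = fst F \<and> set xs \<subseteq> Feas g \<longrightarrow> apply_op (snd F) (fst g) xs \<in> Feas g)"

definition Pol :: "'d wrel set \<Rightarrow> 'd op set" where
  "Pol \<Gamma> = {(k, f). 1 \<le> k \<and> f \<in> ops k \<and> (\<forall>g\<in>\<Gamma>. is_polymorphism (k, f) g)}"

definition superpos :: "('d list \<Rightarrow> 'd) \<Rightarrow> nat \<Rightarrow> ('d list \<Rightarrow> 'd) list \<Rightarrow> ('d list \<Rightarrow> 'd)" where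
  "superpos f l gs = (\<lambda>xs. if length xs = l then f (map (\<lambda>g. g xs) gs) else undefined)"

definition is_weighting :: "'d wgt \<Rightarrow> bool" where
  "is_weighting W \<longleftrightarrow> (let k = fst W; w = snd W in
     1 \<le> k \<and> (\<forall>f. f \<notin> ops k \<longrightarrow> w f = 0) \<and> sum w (ops k) = 0 \<and>
     (\<forall>f. w f < 0 \<longrightarrow> f \<in> projs k))"

definition supp :: "'d wgt \<Rightarrow> 'd op set" where
  "supp W = {(fst W, f) | f. f \<in> projs (fst W)} \<union>
            {(fst W, f) | f. f \<in> ops (fst W) \<and> snd W f > 0}"

definition supp_set :: "'d wgt set \<Rightarrow> 'd op set" where
  "supp_set \<Omega> = all_projs \<union> (\<Union>W\<in>\<Omega>. supp W)"

definition wsuperpos :: "'d wgt \<Rightarrow> nat \<Rightarrow> ('d list \<Rightarrow> 'd) list \<Rightarrow> 'd wgt" where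
  "wsuperpos W l gs = (l, \<lambda>f'. \<Sum>f\<in>{f \<in> ops (fst W). superpos f l gs = f'}. snd W f)"

definition weighted_clone :: "'d wgt set \<Rightarrow> bool" where
  "weighted_clone \<Omega> \<longleftrightarrow>
     \<Omega> \<noteq> {} \<and> (\<forall>W\<in>\<Omega>. is_weighting W) \<and>
     (\<forall>W\<in>\<Omega>. \<forall>c::real. c \<ge> 0 \<longrightarrow> (fst W, \<lambda>f. c * snd W f) \<in> \<Omega>) \<and>
     (\<forall>W1\<in>\<Omega>. \<forall>W2\<in>\<Omega>. fst W1 = fst W2 \<longrightarrow> (fst W1, \<lambda>f. snd W1 f + snd W2 f) \<in> \<Omega>) \<and>
     (\<forall>W\<in>\<Omega>. \<forall>l gs. length gs = fst W \<and> (\<forall>g\<in>set gs. (l, g) \<in> supp_set \<Omega>) \<and>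
         is_weighting (wsuperpos W l gs) \<longrightarrow> wsuperpos W l gs \<in> \<Omega>) \<and>
     (\<forall>k. closed {w. (k, w) \<in> \<Omega>})"

definition improves :: "'d wgt \<Rightarrow> 'd wrel \<Rightarrow> bool" where
  "improves W g \<longleftrightarrow> supp W \<subseteq> Pol {g} \<and>
     (\<forall>xs. length xs = fst W \<and> set xs \<subseteq> Feas g \<longrightarrow>
        (\<Sum>f\<in>{f. (fst W, f) \<in> supp W}. snd W f * real_of_ereal (snd g (apply_op f (fst g) xs))) \<le> 0)"

definition Imp :: "'d wgt set \<Rightarrow> 'd wrel set" where
  "Imp \<Omega> = {g. is_wrel g \<and> (\<forall>W\<in>\<Omega>. improves W g)}"

end

theory Submission
  imports Defs
begin

lemma projs_ops: "projs k \<subseteq> ops k"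
  unfolding projs_def proj_def ops_def by auto

lemma finite_ops: "finite (ops k :: ('d::finite list \<Rightarrow> 'd) set)"
proof -
  let ?A = "{xs::'d list. length xs = k}"
  have fA: "finite ?A" using finite_lists_length_eq[of "UNIV::'d set" k] by simp
  have "inj_on (\<lambda>f. restrict f ?A) (ops k)"
  proof (rule inj_onI)
    fix f g :: "'d list \<Rightarrow> 'd" assume "f \<in> ops k" "g \<in> ops k" "restrict f ?A = restrict g ?A"
    note h = this
    show "f = g"
    proof
      fix xs :: "'d list"
      show "f xs = g xs"
      proof (cases "length xs = k")
        case True
        then show ?thesis using fun_cong[OF h(3), of xs] by simp
      next
        case False
        then show ?thesis using h(1,2) unfolding ops_def by simp
      qed
    qed
  qed
  moreover have "(\<lambda>f. restrict f ?A) ` (ops k) \<subseteq> PiE ?A (\<lambda>_. UNIV)" by (auto split: if_splits)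
  moreover have "finite (PiE ?A (\<lambda>_. UNIV::'d set))" using fA by (simp add: finite_PiE)
  ultimately show ?thesis by (rule inj_on_finite)
qed

lemma superpos_ops: "superpos f k gs \<in> ops k"
  unfolding superpos_def ops_def by auto

lemma superpos_proj:
  assumes "i < length gs" "gs!i \<in> ops k"
  shows "superpos (proj (length gs) i) k gs = gs!i"
  using assms unfolding superpos_def proj_def ops_def by (auto intro!: ext)

lemma superpos_id:
  assumes "f \<in> ops k"
  shows "superpos f k (map (proj k) [0..<k]) = f"
proof (rule ext)
  fix xs :: "'a list"
  show "superpos f k (map (proj k) [0..<k]) xs = f xs"
  proof (cases "length xs = k")
    case True
    then have "map (\<lambda>g. g xs) (map (proj k) [0..<k]) = xs"
      by (auto simp: proj_def intro: nth_equalityI)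
    then show ?thesis using True by (simp add: superpos_def)
  next
    case False then show ?thesis using assms by (simp add: superpos_def ops_def)
  qed
qed

lemma superpos_comp:
  assumes "length gs = m"
  shows "superpos (superpos f m ps) k gs = superpos f k (map (\<lambda>p. superpos p k gs) ps)"
  using assms unfolding superpos_def by (auto intro!: ext simp: comp_def)

lemma wsuperpos_comp:
  fixes V :: "('d::finite) wgt"
  assumes "length gs = m"
  shows "snd (wsuperpos (wsuperpos V m ps) k gs) f' =
         snd (wsuperpos V k (map (\<lambda>p. superpos p k gs) ps)) f'"
proof -
  let ?h = "\<lambda>f. superpos f m ps"
  let ?S = "{f \<in> ops (fst V). superpos f k (map (\<lambda>p. superpos p k gs) ps) = f'}"
  let ?T = "{f1 \<in> ops m. superpos f1 k gs = f'}"
  have fS: "finite ?S" using finite_ops by (rule finite_subset[rotated]) auto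
  have fT: "finite ?T" using finite_ops by (rule finite_subset[rotated]) auto
  have im: "?h ` ?S \<subseteq> ?T" using superpos_ops superpos_comp[OF assms] by auto
  have "snd (wsuperpos V k (map (\<lambda>p. superpos p k gs) ps)) f' = sum (snd V) ?S"
    by (simp add: wsuperpos_def)
  also have "\<dots> = (\<Sum>y\<in>?T. sum (snd V) {x. x \<in> ?S \<and> ?h x = y})"
    using sum.group[OF fS fT im, of "snd V"] by simp
  also have "\<dots> = (\<Sum>y\<in>?T. sum (snd V) {f \<in> ops (fst V). superpos f m ps = y})"
  proof (rule sum.cong[OF refl])
    fix y assume "y \<in> ?T"
    then show "sum (snd V) {x. x \<in> ?S \<and> ?h x = y} = sum (snd V) {f \<in> ops (fst V). superpos f m ps = y}"
    proof -
      have "{x. x \<in> ?S \<and> ?h x = y} = {f \<in> ops (fst V). superpos f m ps = y}"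
      proof (rule set_eqI, rule iffI)
        fix x assume "x \<in> {x. x \<in> ?S \<and> ?h x = y}" then show "x \<in> {f \<in> ops (fst V). superpos f m ps = y}" by simp
      next
        fix x assume x: "x \<in> {f \<in> ops (fst V). superpos f m ps = y}"
        then have "superpos x k (map (\<lambda>p. superpos p k gs) ps) = f'"
          using superpos_comp[OF assms, of x ps k] \<open>y \<in> ?T\<close> by simp
        then show "x \<in> {x. x \<in> ?S \<and> ?h x = y}" using x by simp
      qed
      then show ?thesis by simp
    qed
  qed
  also have "\<dots> = snd (wsuperpos (wsuperpos V m ps) k gs) f'"
    by (simp add: wsuperpos_def)
  finally show ?thesis by simp
qed

lemma weighting_neg:
  "is_weighting W \<Longrightarrow> f \<notin> projs (fst W) \<Longrightarrow> snd W f \<ge> 0"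
  unfolding is_weighting_def Let_def using not_le by blast

lemma weighting_fst: "is_weighting W \<Longrightarrow> 1 \<le> fst W"
  unfolding is_weighting_def Let_def by auto

lemma wsuperpos_basic:
  fixes V :: "('d::finite) wgt"
  assumes W: "is_weighting V" and k: "1 \<le> k"
    and nn: "\<And>f'. f' \<notin> projs k \<Longrightarrow> snd (wsuperpos V k gs) f' \<ge> 0"
  shows "is_weighting (wsuperpos V k gs)"
proof -
  let ?h = "\<lambda>f. superpos f k gs"
  have van: "snd (wsuperpos V k gs) f' = 0" if "f' \<notin> ops k" for f'
  proof -
    have e: "{f \<in> ops (fst V). superpos f k gs = f'} = {}" using that superpos_ops by auto
    have "snd (wsuperpos V k gs) f' = sum (snd V) {f \<in> ops (fst V). superpos f k gs = f'}"
      by (simp add: wsuperpos_def)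
    also have "\<dots> = 0" unfolding e by simp
    finally show ?thesis .
  qed
  have im: "?h ` ops (fst V) \<subseteq> ops k" using superpos_ops by auto
  have "sum (snd (wsuperpos V k gs)) (ops k) = (\<Sum>y\<in>ops k. sum (snd V) {x. x \<in> ops (fst V) \<and> ?h x = y})"
    by (simp add: wsuperpos_def)
  also have "\<dots> = sum (snd V) (ops (fst V))"
    by (rule sum.group[OF finite_ops finite_ops im])
  also have "\<dots> = 0" using W unfolding is_weighting_def Let_def by simp
  finally have s0: "sum (snd (wsuperpos V k gs)) (ops k) = 0" .
  have neg: "f \<in> projs k" if lt: "snd (wsuperpos V k gs) f < 0" for f
  proof (rule ccontr)
    assume "f \<notin> projs k"
    then have "snd (wsuperpos V k gs) f \<ge> 0" by (rule nn)
    then show False using lt by simp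
  qed
  have fst: "fst (wsuperpos V k gs) = k" by (simp add: wsuperpos_def)
  show ?thesis unfolding is_weighting_def Let_def fst
    using k s0 by (auto intro: van neg)
qed

lemma wsuperpos_nonneg:
  fixes V :: "('d::finite) wgt"
  assumes W: "is_weighting V" and len: "length gs = fst V" and gs: "set gs \<subseteq> ops k"
    and f': "f' \<notin> set gs"
  shows "\<And>f. f \<in> {f \<in> ops (fst V). superpos f k gs = f'} \<Longrightarrow> snd V f \<ge> 0"
proof -
  fix f assume f: "f \<in> {f \<in> ops (fst V). superpos f k gs = f'}"
  show "snd V f \<ge> 0"
  proof (rule ccontr)
    assume "\<not> snd V f \<ge> 0"
    then have "f \<in> projs (fst V)" using W unfolding is_weighting_def Let_def by auto
    then obtain i where i: "i < length gs" "f = proj (length gs) i" using len unfolding projs_def by auto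
    then have "superpos f k gs = gs!i" using superpos_proj gs by (metis nth_mem subsetD)
    then show False using f f' i by (metis (mono_tags, lifting) mem_Collect_eq nth_mem)
  qed
qed

lemma wsuperpos_ge0:
  fixes V :: "('d::finite) wgt"
  assumes W: "is_weighting V" and len: "length gs = fst V" and gs: "set gs \<subseteq> ops k"
    and f': "f' \<notin> set gs"
  shows "snd (wsuperpos V k gs) f' \<ge> 0"
  unfolding wsuperpos_def snd_conv by (rule sum_nonneg) (rule wsuperpos_nonneg[OF assms], simp)

lemma wsuperpos_geq:
  fixes V :: "('d::finite) wgt"
  assumes W: "is_weighting V" and len: "length gs = fst V" and gs: "set gs \<subseteq> ops k"
    and f': "f' \<notin> set gs" and g: "g \<in> ops (fst V)" "superpos g k gs = f'"
  shows "snd (wsuperpos V k gs) f' \<ge> snd V g"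
proof -
  have "snd V g \<le> sum (snd V) {f \<in> ops (fst V). superpos f k gs = f'}"
    apply (rule member_le_sum)
    using g wsuperpos_nonneg[OF assms(1-4)] apply auto[2]
    by (rule finite_subset[OF _ finite_ops]) auto
  then show ?thesis by (simp add: wsuperpos_def)
qed

lemma wsuperpos_projs:
  fixes V :: "('d::finite) wgt"
  assumes W: "is_weighting V" and len: "length gs = fst V" and gs: "set gs \<subseteq> projs k"
    and k: "1 \<le> k"
  shows "is_weighting (wsuperpos V k gs)"
  apply (rule wsuperpos_basic[OF W k])
  apply (rule wsuperpos_ge0[OF W len])
  using gs projs_ops by auto

lemma wc_weighting: "weighted_clone \<Omega> \<Longrightarrow> W \<in> \<Omega> \<Longrightarrow> is_weighting W"
  unfolding weighted_clone_def by blast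

lemma wc_scale: "weighted_clone \<Omega> \<Longrightarrow> W \<in> \<Omega> \<Longrightarrow> c \<ge> 0 \<Longrightarrow> (fst W, \<lambda>f. c * snd W f) \<in> \<Omega>"
  unfolding weighted_clone_def by blast

lemma wc_add: "weighted_clone \<Omega> \<Longrightarrow> W1 \<in> \<Omega> \<Longrightarrow> W2 \<in> \<Omega> \<Longrightarrow> fst W1 = fst W2 \<Longrightarrow>
    (fst W1, \<lambda>f. snd W1 f + snd W2 f) \<in> \<Omega>"
  unfolding weighted_clone_def by blast

lemma wc_sup: "weighted_clone \<Omega> \<Longrightarrow> W \<in> \<Omega> \<Longrightarrow> length gs = fst W \<Longrightarrow>
    (\<forall>g\<in>set gs. (l, g) \<in> supp_set \<Omega>) \<Longrightarrow> is_weighting (wsuperpos W l gs) \<Longrightarrow> wsuperpos W l gs \<in> \<Omega>"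
  unfolding weighted_clone_def by blast

lemma supp_set_ops:
  assumes wc: "weighted_clone \<Omega>" and p: "(k, f) \<in> supp_set \<Omega>"
  shows "1 \<le> k \<and> f \<in> ops k"
proof -
  have "(k, f) \<in> all_projs \<or> (\<exists>W\<in>\<Omega>. (k, f) \<in> supp W)" using p unfolding supp_set_def by auto
  then show ?thesis
  proof
    assume "(k, f) \<in> all_projs" then show ?thesis unfolding all_projs_def using projs_ops by auto
  next
    assume "\<exists>W\<in>\<Omega>. (k, f) \<in> supp W"
    then obtain W where W: "W \<in> \<Omega>" "(k, f) \<in> supp W" by blast
    have "1 \<le> fst W" using weighting_fst wc_weighting[OF wc W(1)] by blast
    then show ?thesis using W(2) projs_ops unfolding supp_def by auto
  qed
qed

lemma projs_supp: "g \<in> projs n \<Longrightarrow> 1 \<le> n \<Longrightarrow> (n, g) \<in> supp_set \<Omega>"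
  unfolding supp_set_def all_projs_def by auto

lemma exists_arity:
  fixes \<Omega> :: "('d::finite) wgt set"
  assumes wc: "weighted_clone \<Omega>" and k: "1 \<le> k"
  shows "\<exists>M\<in>\<Omega>. fst M = k"
proof -
  obtain W0 where W0: "W0 \<in> \<Omega>" using wc unfolding weighted_clone_def by blast
  have W0w: "is_weighting W0" using wc_weighting[OF wc W0] .
  let ?gs = "replicate (fst W0) (proj k 0)"
  have p: "set ?gs \<subseteq> projs k" using k unfolding projs_def by auto
  have "wsuperpos W0 k ?gs \<in> \<Omega>"
    apply (rule wc_sup[OF wc W0])
    using p projs_supp k wsuperpos_projs[OF W0w _ p k] by auto
  moreover have "fst (wsuperpos W0 k ?gs) = k" by (simp add: wsuperpos_def)
  ultimately show ?thesis by blast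
qed

lemma exists_pos:
  fixes \<Omega> :: "('d::finite) wgt set"
  assumes wc: "weighted_clone \<Omega>" and fS: "finite S" and Sp: "S \<inter> projs k = {}" and k: "1 \<le> k"
    and Sw: "\<forall>s\<in>S. \<exists>W\<in>\<Omega>. fst W = k \<and> snd W s > 0"
  shows "\<exists>M\<in>\<Omega>. fst M = k \<and> (\<forall>s\<in>S. snd M s > 0)"
  using fS Sp Sw
proof (induction S rule: finite_induct)
  case empty
  then show ?case using exists_arity[OF wc k] by auto
next
  case (insert s S)
  then obtain M where M: "M \<in> \<Omega>" "fst M = k" "\<forall>s\<in>S. snd M s > 0" by auto
  obtain W where W: "W \<in> \<Omega>" "fst W = k" "snd W s > 0" using insert.prems by auto
  let ?M = "(fst M, \<lambda>f. snd M f + snd W f)"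
  have "?M \<in> \<Omega>" using wc_add[OF wc M(1) W(1)] M W by simp
  moreover have "snd ?M t > 0" if t: "t \<in> insert s S" for t
  proof -
    have tp: "t \<notin> projs k" using t insert.prems by auto
    have a: "snd M t \<ge> 0" using weighting_neg[OF wc_weighting[OF wc M(1)]] tp M(2) by simp
    have b: "snd W t \<ge> 0" using weighting_neg[OF wc_weighting[OF wc W(1)]] tp W(2) by simp
    show ?thesis
    proof (cases "t = s")
      case True then show ?thesis using a W(3) by simp
    next
      case False then have "t \<in> S" using t by simp
      then have "snd M t > 0" using M(3) by blast
      then show ?thesis using b by simp
    qed
  qed
  ultimately show ?case using M(2) by (intro bexI[of _ ?M]) auto
qed

lemma map_superpos_proj:
  assumes "length G = n" "a + l' \<le> n" "set G \<subseteq> ops k"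
  shows "map (\<lambda>p. superpos p k G) (map (\<lambda>i. proj n (a + i)) [0..<l']) = map (\<lambda>i. G ! (a + i)) [0..<l']"
  using assms superpos_proj[of _ G k] by (auto simp: nth_mem subset_iff)

lemma clone_closed:
  fixes \<Omega> :: "('d::finite) wgt set"
  assumes wc: "weighted_clone \<Omega>" and W: "W \<in> \<Omega>" and g: "(l, g) \<in> supp W"
    and len: "length hs = l" and hs: "\<forall>h\<in>set hs. (k, h) \<in> supp_set \<Omega>"
  shows "(k, superpos g k hs) \<in> supp_set \<Omega>"
proof -
  have Ww: "is_weighting W" using wc W by (rule wc_weighting)
  have l: "l = fst W" using g unfolding supp_def by auto
  have l1: "1 \<le> l" using weighting_fst[OF Ww] l by simp
  then have "hs \<noteq> []" using len by auto
  then obtain h0 where "h0 \<in> set hs" by (cases hs) auto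
  then have k1: "1 \<le> k" using hs supp_set_ops[OF wc] by blast
  have hsops: "set hs \<subseteq> ops k" using hs supp_set_ops[OF wc] by blast
  have gcases: "g \<in> projs l \<or> (g \<in> ops l \<and> snd W g > 0)" using g l unfolding supp_def by auto
  show ?thesis
  proof (cases "g \<in> projs l")
    case True
    then obtain i where i: "i < l" "g = proj l i" unfolding projs_def by auto
    have "hs ! i \<in> ops k" using hsops i len by (simp add: nth_mem subset_iff)
    then have "superpos g k hs = hs!i" using superpos_proj[of i hs k] len i by simp
    then show ?thesis using hs i len nth_mem by metis
  next
    case False
    then have gops: "g \<in> ops l" and gpos: "snd W g > 0" using gcases by auto
    define S where "S = {h \<in> set hs. h \<notin> projs k}"
    have fS: "finite S" unfolding S_def by simp
    have Sp: "S \<inter> projs k = {}" unfolding S_def by auto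
    have Sw: "\<forall>s\<in>S. \<exists>W'\<in>\<Omega>. fst W' = k \<and> snd W' s > 0"
    proof
      fix s assume s: "s \<in> S"
      then have ks: "(k,s) \<in> supp_set \<Omega>" and sp: "s \<notin> projs k" using hs unfolding S_def by auto
      then have "(k,s) \<notin> all_projs" unfolding all_projs_def by auto
      then obtain W' where W': "W' \<in> \<Omega>" "(k,s) \<in> supp W'" using ks unfolding supp_set_def by auto
      then show "\<exists>W'\<in>\<Omega>. fst W' = k \<and> snd W' s > 0" using sp unfolding supp_def by auto
    qed
    obtain M where M: "M \<in> \<Omega>" "fst M = k" "\<forall>s\<in>S. snd M s > 0"
      using exists_pos[OF wc fS Sp k1 Sw] by blast
    have Mw: "is_weighting M" using wc M(1) by (rule wc_weighting)
    define \<nu> where "\<nu> = snd (wsuperpos W k hs)"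
    define c where "c = (\<Sum>s\<in>S. (\<bar>\<nu> s\<bar> + 1) / snd M s)"
    have c0: "c \<ge> 0" unfolding c_def using M(3) by (intro sum_nonneg divide_nonneg_pos) auto
    have cS: "c * snd M s \<ge> \<bar>\<nu> s\<bar> + 1" if s: "s \<in> S" for s
    proof -
      have "(\<bar>\<nu> s\<bar> + 1) / snd M s \<le> c" unfolding c_def
        using s M(3) fS by (intro member_le_sum) (auto intro: divide_nonneg_pos)
      then show ?thesis using M(3) s by (simp add: pos_divide_le_eq)
    qed
    define n where "n = l + k"
    define ps1 :: "('d list \<Rightarrow> 'd) list" where "ps1 = map (\<lambda>i. proj n (0 + i)) [0..<l]"
    define ps2 :: "('d list \<Rightarrow> 'd) list" where "ps2 = map (\<lambda>i. proj n (l + i)) [0..<k]"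
    define pk :: "('d list \<Rightarrow> 'd) list" where "pk = map (proj k) [0..<k]"
    define G where "G = hs @ pk"
    define W1 where "W1 = wsuperpos W n ps1"
    define M1 where "M1 = wsuperpos M n ps2"
    have n1: "1 \<le> n" using l1 n_def by simp
    have ps1p: "set ps1 \<subseteq> projs n" unfolding ps1_def projs_def n_def by auto
    have ps2p: "set ps2 \<subseteq> projs n" unfolding ps2_def projs_def n_def by auto
    have pkp: "set pk \<subseteq> projs k" unfolding pk_def projs_def by auto
    have W1w: "is_weighting W1" unfolding W1_def
      using wsuperpos_projs[OF Ww _ ps1p n1] l by (simp add: ps1_def)
    have M1w: "is_weighting M1" unfolding M1_def
      using wsuperpos_projs[OF Mw _ ps2p n1] M(2) by (simp add: ps2_def)
    have W1O: "W1 \<in> \<Omega>" unfolding W1_def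
      apply (rule wc_sup[OF wc W])
      using l ps1p n1 projs_supp W1w unfolding W1_def by (auto simp: ps1_def)
    have M1O: "M1 \<in> \<Omega>" unfolding M1_def
      apply (rule wc_sup[OF wc M(1)])
      using M(2) ps2p n1 projs_supp M1w unfolding M1_def by (auto simp: ps2_def)
    have fW1: "fst W1 = n" by (simp add: W1_def wsuperpos_def)
    have fM1: "fst M1 = n" by (simp add: M1_def wsuperpos_def)
    define cM1 where "cM1 = (fst M1, \<lambda>f. c * snd M1 f)"
    have cM1O: "cM1 \<in> \<Omega>" unfolding cM1_def using wc_scale[OF wc M1O c0] .
    define B where "B = (fst W1, \<lambda>f. snd W1 f + snd cM1 f)"
    have BO: "B \<in> \<Omega>" unfolding B_def using wc_add[OF wc W1O cM1O] fW1 fM1 by (simp add: cM1_def)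
    have Bw: "is_weighting B" using wc BO by (rule wc_weighting)
    have fB: "fst B = n" by (simp add: B_def fW1)
    have lenG: "length G = n" unfolding G_def pk_def n_def using len by simp
    have Gsupp: "\<forall>h\<in>set G. (k,h) \<in> supp_set \<Omega>"
      unfolding G_def using hs pkp projs_supp[OF _ k1] by fastforce
    have Gops: "set G \<subseteq> ops k" unfolding G_def using hsops pkp projs_ops by auto
    have m1: "map (\<lambda>p. superpos p k G) ps1 = hs"
    proof -
      have "map (\<lambda>p. superpos p k G) ps1 = map (\<lambda>i. G ! (0 + i)) [0..<l]"
        unfolding ps1_def by (rule map_superpos_proj[OF lenG _ Gops]) (auto simp: n_def)
      also have "\<dots> = hs" unfolding G_def using len by (auto intro: nth_equalityI simp: nth_append)
      finally show ?thesis .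
    qed
    have m2: "map (\<lambda>p. superpos p k G) ps2 = pk"
    proof -
      have "map (\<lambda>p. superpos p k G) ps2 = map (\<lambda>i. G ! (l + i)) [0..<k]"
        unfolding ps2_def by (rule map_superpos_proj[OF lenG _ Gops]) (auto simp: n_def)
      also have "\<dots> = pk" unfolding G_def pk_def using len by (auto intro: nth_equalityI simp: nth_append)
      finally show ?thesis .
    qed
    have Mid: "snd (wsuperpos M k pk) f' = (if f' \<in> ops k then snd M f' else 0)" for f'
    proof -
      have "{f \<in> ops (fst M). superpos f k pk = f'} = (if f' \<in> ops k then {f'} else {})"
        using superpos_id[of _ k] M(2) unfolding pk_def by auto
      then show ?thesis by (simp add: wsuperpos_def)
    qed
    have Fval: "snd (wsuperpos B k G) f' = \<nu> f' + c * (if f' \<in> ops k then snd M f' else 0)" for f'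
    proof -
      have "snd (wsuperpos B k G) f' = (\<Sum>f\<in>{f \<in> ops n. superpos f k G = f'}. snd W1 f + c * snd M1 f)"
        by (simp add: wsuperpos_def B_def cM1_def fW1)
      also have "\<dots> = snd (wsuperpos W1 k G) f' + c * snd (wsuperpos M1 k G) f'"
        by (simp add: wsuperpos_def fW1 fM1 sum.distrib sum_distrib_left)
      also have "snd (wsuperpos W1 k G) f' = \<nu> f'"
        unfolding W1_def \<nu>_def using wsuperpos_comp[OF lenG, of W ps1 k f'] m1 by simp
      also have "snd (wsuperpos M1 k G) f' = snd (wsuperpos M k pk) f'"
        unfolding M1_def using wsuperpos_comp[OF lenG, of M ps2 k f'] m2 by simp
      finally show ?thesis using Mid by simp
    qed
    have lenW: "length hs = fst W" using len l by simp
    have Mnn: "snd M f' \<ge> 0" if "f' \<notin> projs k" for f'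
      using weighting_neg[OF Mw] that M(2) by simp
    have Fw: "is_weighting (wsuperpos B k G)"
    proof (rule wsuperpos_basic[OF Bw k1])
      fix f' :: "'d list \<Rightarrow> 'd" assume f': "f' \<notin> projs k"
      show "snd (wsuperpos B k G) f' \<ge> 0"
      proof (cases "f' \<in> S")
        case True
        then have "f' \<in> ops k" using hsops unfolding S_def by auto
        then show ?thesis using Fval[of f'] cS[OF True] by simp
      next
        case False
        then have "f' \<notin> set hs" using f' unfolding S_def by auto
        then have "\<nu> f' \<ge> 0" unfolding \<nu>_def by (rule wsuperpos_ge0[OF Ww lenW hsops])
        moreover have "c * (if f' \<in> ops k then snd M f' else 0) \<ge> 0"
          using c0 Mnn[OF f'] by simp
        ultimately show ?thesis using Fval[of f'] by simp
      qed
    qed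
    have FO: "wsuperpos B k G \<in> \<Omega>"
      by (rule wc_sup[OF wc BO]) (use lenG fB Gsupp Fw in auto)
    show ?thesis
    proof (cases "superpos g k hs \<in> projs k")
      case True then show ?thesis using projs_supp k1 by blast
    next
      case False
      let ?f = "superpos g k hs"
      have fo: "?f \<in> ops k" by (rule superpos_ops)
      have "snd (wsuperpos B k G) ?f > 0"
      proof (cases "?f \<in> S")
        case True
        then show ?thesis using Fval[of ?f] cS[OF True] fo by simp
      next
        case False
        then have "?f \<notin> set hs" using \<open>?f \<notin> projs k\<close> unfolding S_def by auto
        then have "\<nu> ?f \<ge> snd W g" unfolding \<nu>_def
          by (rule wsuperpos_geq[OF Ww lenW hsops]) (use gops l in auto)
        moreover have "c * (if ?f \<in> ops k then snd M ?f else 0) \<ge> 0"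
          using c0 Mnn[OF \<open>?f \<notin> projs k\<close>] by simp
        ultimately show ?thesis using Fval[of ?f] gpos by simp
      qed
      then have "(k, ?f) \<in> supp (wsuperpos B k G)" unfolding supp_def using fo
        by (simp add: wsuperpos_def)
      then show ?thesis unfolding supp_set_def using FO by blast
    qed
  qed
qed

lemma apply_op_map:
  assumes "\<forall>r\<in>set rws. length r = k"
  shows "apply_op g (length rws) (map (\<lambda>h. map h rws) hs) = map (superpos g k hs) rws"
proof (rule nth_equalityI)
  show "length (apply_op g (length rws) (map (\<lambda>h. map h rws) hs)) = length (map (superpos g k hs) rws)"
    by (simp add: apply_op_def)
next
  fix j assume "j < length (apply_op g (length rws) (map (\<lambda>h. map h rws) hs))"
  then have j: "j < length rws" by (simp add: apply_op_def)
  then have "length (rws ! j) = k" using assms nth_mem by blast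
  then show "apply_op g (length rws) (map (\<lambda>h. map h rws) hs) ! j = map (superpos g k hs) rws ! j"
    using j by (simp add: apply_op_def superpos_def comp_def)
qed

lemma apply_op_proj:
  assumes "i < length xs" "\<forall>x\<in>set xs. length x = m"
  shows "apply_op (proj (length xs) i) m xs = xs ! i"
proof (rule nth_equalityI)
  show "length (apply_op (proj (length xs) i) m xs) = length (xs ! i)"
    using assms nth_mem by (simp add: apply_op_def)
next
  fix j assume "j < length (apply_op (proj (length xs) i) m xs)"
  then show "apply_op (proj (length xs) i) m xs ! j = xs ! i ! j"
    using assms by (simp add: apply_op_def proj_def)
qed

theorem lemma5:
  fixes \<Omega> :: "('d::finite) wgt set"
  assumes "CARD('d) \<ge> 2"
    and "weighted_clone \<Omega>"
  shows "supp_set \<Omega> = Pol (Imp \<Omega>)"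
proof
  have wc: "weighted_clone \<Omega>" by fact
  show "supp_set \<Omega> \<subseteq> Pol (Imp \<Omega>)"
  proof
    fix p assume p: "p \<in> supp_set \<Omega>"
    obtain k f where pk: "p = (k,f)" by (cases p)
    have kf: "1 \<le> k" "f \<in> ops k" using supp_set_ops[OF wc] p pk by auto
    have "is_polymorphism (k,f) \<gamma>" if \<gamma>: "\<gamma> \<in> Imp \<Omega>" for \<gamma>
    proof (cases "(k,f) \<in> all_projs")
      case True
      then obtain i where i: "i<k" "f = proj k i" unfolding all_projs_def projs_def by auto
      show ?thesis unfolding is_polymorphism_def
      proof (intro allI impI)
        fix xs assume xs: "length xs = fst (k,f) \<and> set xs \<subseteq> Feas \<gamma>"
        then have lx: "length xs = k" and fe: "\<forall>x\<in>set xs. length x = fst \<gamma>"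
          unfolding Feas_def by auto
        have "apply_op (snd (k,f)) (fst \<gamma>) xs = xs!i"
          using apply_op_proj[of i xs "fst \<gamma>"] lx fe i by simp
        then show "apply_op (snd (k,f)) (fst \<gamma>) xs \<in> Feas \<gamma>" using xs i nth_mem by fastforce
      qed
    next
      case False
      then obtain W where "W\<in>\<Omega>" "(k,f) \<in> supp W" using p pk unfolding supp_set_def by auto
      then have "(k,f) \<in> Pol {\<gamma>}" using \<gamma> unfolding Imp_def improves_def by auto
      then show ?thesis unfolding Pol_def by auto
    qed
    then show "p \<in> Pol (Imp \<Omega>)" unfolding Pol_def using pk kf by auto
  qed
next
  have wc: "weighted_clone \<Omega>" by fact
  show "Pol (Imp \<Omega>) \<subseteq> supp_set \<Omega>"
  proof
    fix p assume p: "p \<in> Pol (Imp \<Omega>)"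
    obtain k f where pk: "p = (k,f)" by (cases p)
    have k1: "1 \<le> k" and fops: "f \<in> ops k" and pol: "\<forall>\<gamma>\<in>Imp \<Omega>. is_polymorphism (k,f) \<gamma>"
      using p pk unfolding Pol_def by auto
    obtain U :: "'d list" where U: "set U = UNIV" using finite_list[of "UNIV::'d set"] by auto
    define rws where "rws = List.n_lists k U"
    have rws: "set rws = {r. length r = k}" by (simp add: rws_def set_n_lists U)
    have rwsk: "\<forall>r\<in>set rws. length r = k" using rws by auto
    define m where "m = length rws"
    define R where "R = {map h rws | h. (k,h) \<in> supp_set \<Omega>}"
    define \<gamma> :: "'d wrel" where "\<gamma> = (m, \<lambda>y. if y \<in> R then 0 else \<infinity>)"
    have Feas: "Feas \<gamma> = R" unfolding Feas_def \<gamma>_def R_def m_def by auto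
    have rz: "real_of_ereal (snd \<gamma> y) = 0" for y by (simp add: \<gamma>_def)
    have "\<gamma> \<in> Imp \<Omega>"
      unfolding Imp_def
    proof (intro CollectI conjI ballI)
      show "is_wrel \<gamma>" unfolding is_wrel_def \<gamma>_def by simp
    next
      fix W assume W: "W \<in> \<Omega>"
      have Ww: "is_weighting W" using wc W by (rule wc_weighting)
      have "supp W \<subseteq> Pol {\<gamma>}"
      proof
        fix q assume q: "q \<in> supp W"
        obtain l g where ql: "q = (l,g)" by (cases q)
        have l: "l = fst W" using q ql unfolding supp_def by auto
        have l1: "1 \<le> l" using weighting_fst[OF Ww] l by simp
        have gops: "g \<in> ops l" using q ql projs_ops unfolding supp_def by auto
        have "is_polymorphism (l,g) \<gamma>" unfolding is_polymorphism_def
        proof (intro allI impI)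
          fix xs assume xs: "length xs = fst (l,g) \<and> set xs \<subseteq> Feas \<gamma>"
          then have lx: "length xs = l" by simp
          have ex: "\<forall>j. \<exists>h. j < l \<longrightarrow> (k,h) \<in> supp_set \<Omega> \<and> xs!j = map h rws"
          proof
            fix j
            show "\<exists>h. j < l \<longrightarrow> (k,h) \<in> supp_set \<Omega> \<and> xs!j = map h rws"
            proof (cases "j < l")
              case True
              then have "xs!j \<in> R" using xs Feas lx nth_mem by blast
              then show ?thesis unfolding R_def by blast
            qed simp
          qed
          obtain H where H: "\<forall>j<l. (k, H j) \<in> supp_set \<Omega> \<and> xs!j = map (H j) rws"
            using choice[OF ex] by blast
          define hs where "hs = map H [0..<l]"
          have xhs: "xs = map (\<lambda>h. map h rws) hs" unfolding hs_def
            using H lx by (auto intro: nth_equalityI)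
          have hsS: "\<forall>h\<in>set hs. (k,h) \<in> supp_set \<Omega>" unfolding hs_def using H by auto
          have "(k, superpos g k hs) \<in> supp_set \<Omega>"
            by (rule clone_closed[OF wc W q[unfolded ql]]) (use hsS hs_def in auto)
          moreover have "apply_op g m xs = map (superpos g k hs) rws"
            unfolding xhs m_def by (rule apply_op_map[OF rwsk])
          ultimately show "apply_op (snd (l,g)) (fst \<gamma>) xs \<in> Feas \<gamma>"
            unfolding Feas R_def by (auto simp: \<gamma>_def)
        qed
        then show "q \<in> Pol {\<gamma>}" unfolding Pol_def ql using l1 gops by auto
      qed
      then show "improves W \<gamma>" unfolding improves_def by (simp add: rz)
    qed
    then have ip: "is_polymorphism (k,f) \<gamma>" using pol by blast
    define pk' :: "('d list \<Rightarrow> 'd) list" where "pk' = map (proj k) [0..<k]"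
    define cls where "cls = map (\<lambda>h. map h rws) pk'"
    have "set cls \<subseteq> Feas \<gamma>" unfolding Feas cls_def R_def pk'_def
      using projs_supp[OF _ k1] unfolding projs_def by fastforce
    moreover have "length cls = k" unfolding cls_def pk'_def by simp
    ultimately have "apply_op f m cls \<in> Feas \<gamma>" using ip unfolding is_polymorphism_def by (simp add: \<gamma>_def)
    moreover have "apply_op f m cls = map (superpos f k pk') rws"
      unfolding cls_def m_def by (rule apply_op_map[OF rwsk])
    moreover have "superpos f k pk' = f" unfolding pk'_def by (rule superpos_id[OF fops])
    ultimately obtain h where h: "(k,h) \<in> supp_set \<Omega>" "map f rws = map h rws"
      unfolding Feas R_def by auto
    have hops: "h \<in> ops k" using supp_set_ops[OF wc h(1)] by simp
    have "f = h"
    proof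
      fix xs :: "'d list"
      show "f xs = h xs"
      proof (cases "length xs = k")
        case True
        then have "xs \<in> set rws" using rws by simp
        then show ?thesis using h(2) by (simp add: map_eq_conv)
      next
        case False
        then show ?thesis using fops hops unfolding ops_def by simp
      qed
    qed
    then show "p \<in> supp_set \<Omega>" using pk h(1) by simp
  qed
qed

end
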